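(* Let $G$ be a non-regular simple graph on $n$ vertices, and let $u,v$ be vertices of $G$ with $d_G(u)<d_G(v)$. Let $R:=V(G)\setminus\{u,v\}$, $X:=N(u)\setminus N[v]$, $W:=N(u)\cap N(v)$, and $Z:=\{w\in R: w\notin N(u)\cup N(v)\}$. Let $k$ be an integer with $2\le k\le n-2$. If $k-1\le |X|+|W|+|Z|$, then $F_k(G)$ is non-regular.
   Context: For a simple graph $G=(V,E)$ on $n$ vertices and an integer $1\le k<n$, the $k$-token graph $F_k(G)$ is the graph whose vertices are all $k$-element subsets of $V$, two such subsets $A,B$ being adjacent whenever their symmetric difference $A\triangle B$ is a pair $\{a,b\}$ with $a$ adjacent to $b$ in $G$. $N(x)$ is the set of neighbors of $x$ in $G$, $N[x]=N(x)\cup\{x\}$, and $d_G(x)=|N(x)|$. *)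

theory Defs
  imports Main
begin

definition simple_graph :: "'a set \<Rightarrow> ('a \<Rightarrow> 'a \<Rightarrow> bool) \<Rightarrow> bool" where
  "simple_graph V E \<longleftrightarrow> finite V \<and>
     (\<forall>x y. E x y \<longrightarrow> x \<in> V \<and> y \<in> V \<and> x \<noteq> y) \<and>
     (\<forall>x y. E x y \<longrightarrow> E y x)"

definition nbhd :: "'a set \<Rightarrow> ('a \<Rightarrow> 'a \<Rightarrow> bool) \<Rightarrow> 'a \<Rightarrow> 'a set" where
  "nbhd V E x = {y \<in> V. E x y}"

definition cnbhd :: "'a set \<Rightarrow> ('a \<Rightarrow> 'a \<Rightarrow> bool) \<Rightarrow> 'a \<Rightarrow> 'a set" where
  "cnbhd V E x = insert x (nbhd V E x)"

definition degree :: "'a set \<Rightarrow> ('a \<Rightarrow> 'a \<Rightarrow> bool) \<Rightarrow> 'a \<Rightarrow> nat" where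
  "degree V E x = card (nbhd V E x)"

definition regular :: "'a set \<Rightarrow> ('a \<Rightarrow> 'a \<Rightarrow> bool) \<Rightarrow> bool" where
  "regular V E \<longleftrightarrow> (\<forall>x\<in>V. \<forall>y\<in>V. degree V E x = degree V E y)"

definition token_vertices :: "'a set \<Rightarrow> nat \<Rightarrow> 'a set set" where
  "token_vertices V k = {A. A \<subseteq> V \<and> card A = k}"

definition token_adj :: "('a \<Rightarrow> 'a \<Rightarrow> bool) \<Rightarrow> 'a set \<Rightarrow> 'a set \<Rightarrow> bool" where
  "token_adj E A B \<longleftrightarrow> (\<exists>a b. (A - B) \<union> (B - A) = {a, b} \<and> E a b)"

definition token_graph_regular :: "'a set \<Rightarrow> ('a \<Rightarrow> 'a \<Rightarrow> bool) \<Rightarrow> nat \<Rightarrow> bool" where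
  "token_graph_regular V E k = regular (token_vertices V k) (token_adj E)"

end

theory Submission
  imports Defs
begin

lemma tok_deg:
  assumes sg: "simple_graph V E" and AV: "A \<subseteq> V"
  shows "card (nbhd (token_vertices V (card A)) (token_adj E) A) = card {(a,b). a\<in>A \<and> b\<in>V-A \<and> E a b}"
proof -
  have fin: "finite V" using sg simple_graph_def by auto
  have finA: "finite A" using AV fin finite_subset by auto
  have sym: "\<And>x y. E x y \<Longrightarrow> E y x" and irr: "\<And>x y. E x y \<Longrightarrow> x \<in> V \<and> y \<in> V \<and> x \<noteq> y"
    using sg unfolding simple_graph_def by auto
  define P where "P = {(a,b). a\<in>A \<and> b\<in>V-A \<and> E a b}"
  define f where "f = (\<lambda>(a::'a,b::'a). insert b (A - {a}))"
  have inj: "inj_on f P"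
  proof (rule inj_onI)
    fix x y assume xP: "x\<in>P" and yP: "y\<in>P" and fe: "f x = f y"
    obtain a b where x: "x=(a,b)" by (cases x)
    obtain a' b' where y: "y=(a',b')" by (cases y)
    have h: "a\<in>A" "b\<notin>A" "a'\<in>A" "b'\<notin>A" using xP yP x y P_def by auto
    have e: "insert b (A - {a}) = insert b' (A - {a'})" using fe x y f_def by simp
    have bb: "b = b'" using e h by blast
    have d1: "A - {a} = insert b (A - {a}) - {b}" using h by auto
    have d2: "A - {a'} = insert b' (A - {a'}) - {b'}" using h by auto
    have "A - {a} = A - {a'}"
    proof -
      have "A - {a} = insert b (A - {a}) - {b}" by (rule d1)
      also have "\<dots> = insert b' (A - {a'}) - {b'}" using e bb by simp
      also have "\<dots> = A - {a'}" using h by auto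
      finally show ?thesis .
    qed
    then have "a = a'" using h by blast
    then have "a = a' \<and> b = b'" using bb by simp
    then show "x = y" using x y by simp
  qed
  have img: "nbhd (token_vertices V (card A)) (token_adj E) A = f ` P"
  proof
    show "f ` P \<subseteq> nbhd (token_vertices V (card A)) (token_adj E) A"
    proof
      fix B assume "B \<in> f ` P"
      then obtain a b where ab: "a\<in>A" "b\<in>V" "b\<notin>A" "E a b" and B: "B = insert b (A - {a})"
        unfolding P_def f_def by auto
      have "B \<subseteq> V" using B ab AV by auto
      moreover have "card B = card A" using B ab finA
        by (simp add: card_Diff_singleton) (metis Suc_pred card_gt_0_iff empty_iff)
      moreover have "A - B = {a}" "B - A = {b}" using B ab by auto
      then have "token_adj E A B" unfolding token_adj_def using ab by auto
      ultimately show "B \<in> nbhd (token_vertices V (card A)) (token_adj E) A"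
        unfolding nbhd_def token_vertices_def by auto
    qed
  next
    show "nbhd (token_vertices V (card A)) (token_adj E) A \<subseteq> f ` P"
    proof
      fix B assume "B \<in> nbhd (token_vertices V (card A)) (token_adj E) A"
      then have BV: "B \<subseteq> V" "card B = card A" and adj: "token_adj E A B"
        unfolding nbhd_def token_vertices_def by auto
      obtain a b where ab: "(A-B)\<union>(B-A) = {a,b}" "E a b" using adj unfolding token_adj_def by (elim exE conjE) (rule that)
      have "a \<noteq> b" using irr[OF ab(2)] by simp
      have finB: "finite B" using BV fin finite_subset by auto
      have c1: "card (A-B) = card A - card (A\<inter>B)" by (rule card_Diff_subset_Int) (use finA in auto)
      have c2: "card (B-A) = card B - card (B\<inter>A)" by (rule card_Diff_subset_Int) (use finB in auto)
      have "B \<inter> A = A \<inter> B" by blast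
      then have c: "card (A-B) = card (B-A)" using c1 c2 BV(2) by simp
      have "card ((A-B)\<union>(B-A)) = card (A-B) + card (B-A)"
        by (rule card_Un_disjoint) (use finA finB in auto)
      then have "card (A-B) + card (B-A) = 2" using ab \<open>a\<noteq>b\<close> by simp
      then have "card (A-B) = 1" "card (B-A) = 1" using c by auto
      then obtain x where x1: "A-B = {x}" by (meson card_1_singletonE)
      obtain y where y1: "B-A = {y}" using \<open>card (B-A) = 1\<close> by (meson card_1_singletonE)
      note xy = x1 y1
      then have "{x,y} = {a,b}" using ab by (simp add: insert_commute)
      then have "(x=a \<and> y=b) \<or> (x=b \<and> y=a)" by (simp add: doubleton_eq_iff)
      then have "E x y" using ab(2) sym by blast
      have "B = insert y (A - {x})"
      proof (rule set_eqI)
        fix z show "z \<in> B \<longleftrightarrow> z \<in> insert y (A - {x})"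
          using xy by (cases "z \<in> A"; cases "z \<in> B") (auto simp: set_eq_iff)
      qed
      moreover have "(x,y) \<in> P" using xy BV \<open>E x y\<close> unfolding P_def by auto
      ultimately have "B = f (x,y)" "(x,y) \<in> P" unfolding f_def by auto
      then show "B \<in> f ` P" by (rule image_eqI)
    qed
  qed
  show ?thesis using card_image[OF inj] img P_def by simp
qed

lemma ins_deg:
  assumes sg: "simple_graph V E" and SV: "S \<subseteq> V" and xV: "x \<in> V" and xS: "x \<notin> S"
  shows "card {(a,b). a\<in>insert x S \<and> b\<in>V-insert x S \<and> E a b} + card (S \<inter> nbhd V E x)
       = card {(a,b). a\<in>S \<and> b\<in>V-S \<and> E a b} + card (nbhd V E x - S)"
proof -
  have fin: "finite V" using sg simple_graph_def by auto
  have sym: "\<And>x y. E x y \<Longrightarrow> E y x" and irr: "\<And>x y. E x y \<Longrightarrow> x \<in> V \<and> y \<in> V \<and> x \<noteq> y"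
    using sg unfolding simple_graph_def by auto
  define Q where "Q = {(a,b). a\<in>S \<and> b\<in>V-S \<and> E a b}"
  define D where "D = (S \<inter> nbhd V E x) \<times> {x}"
  define R where "R = {x} \<times> (nbhd V E x - S)"
  have finQ: "finite Q" by (rule finite_subset[of _ "V \<times> V"]) (use fin SV in \<open>auto simp: Q_def\<close>)
  have DQ: "D \<subseteq> Q" unfolding D_def Q_def nbhd_def using xS xV sym by auto
  have eq: "{(a,b). a\<in>insert x S \<and> b\<in>V-insert x S \<and> E a b} = (Q - D) \<union> R"
    unfolding Q_def D_def R_def nbhd_def using irr sym xS by auto
  have finR: "finite R" unfolding R_def nbhd_def using fin by auto
  have "card ((Q - D) \<union> R) = card (Q - D) + card R"
    by (rule card_Un_disjoint) (use finQ finR xS in \<open>auto simp: Q_def R_def\<close>)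
  moreover have "card (Q - D) = card Q - card D" using DQ finQ finite_subset card_Diff_subset by metis
  moreover have "card D \<le> card Q" using DQ finQ card_mono by metis
  moreover have "card D = card (S \<inter> nbhd V E x)" unfolding D_def by (simp add: card_cartesian_product)
  moreover have "card R = card (nbhd V E x - S)" unfolding R_def by (simp add: card_cartesian_product)
  ultimately show ?thesis using eq Q_def by simp
qed

theorem lemma2:
  fixes V :: "'a set" and E :: "'a \<Rightarrow> 'a \<Rightarrow> bool" and u v :: 'a and k :: nat
  assumes "simple_graph V E"
    and "\<not> regular V E"
    and "u \<in> V" and "v \<in> V"
    and "degree V E u < degree V E v"
    and "2 \<le> k" and "k \<le> card V - 2"
    and "k - 1 \<le> card (nbhd V E u - cnbhd V E v)
                 + card (nbhd V E u \<inter> nbhd V E v)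
                 + card {w \<in> V - {u, v}. w \<notin> nbhd V E u \<union> nbhd V E v}"
  shows "\<not> token_graph_regular V E k"
proof
  assume reg: "token_graph_regular V E k"
  note sg = assms(1)
  have fin: "finite V" using sg simple_graph_def by auto
  have sym: "\<And>x y. E x y \<Longrightarrow> E y x" and irr: "\<And>x y. E x y \<Longrightarrow> x \<in> V \<and> y \<in> V \<and> x \<noteq> y"
    using sg unfolding simple_graph_def by auto
  have uv: "u \<noteq> v" using assms(5) by auto
  define X where "X = nbhd V E u - cnbhd V E v"
  define W where "W = nbhd V E u \<inter> nbhd V E v"
  define Z where "Z = {w \<in> V - {u, v}. w \<notin> nbhd V E u \<union> nbhd V E v}"
  define Y where "Y = {w \<in> V - {u,v}. E v w \<longrightarrow> E u w}"
  have finN: "finite (nbhd V E u)" unfolding nbhd_def using fin by auto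
  have "card (X \<union> W) = card X + card W"
    by (rule card_Un_disjoint) (use finN in \<open>auto simp: X_def W_def cnbhd_def\<close>)
  moreover have "card (X \<union> W \<union> Z) = card (X \<union> W) + card Z"
    by (rule card_Un_disjoint) (use finN fin in \<open>auto simp: X_def W_def Z_def\<close>)
  moreover have "X \<union> W \<union> Z \<subseteq> Y"
    unfolding X_def W_def Z_def Y_def nbhd_def cnbhd_def using irr by auto
  moreover have "finite Y" unfolding Y_def using fin by auto
  ultimately have "card X + card W + card Z \<le> card Y" by (metis card_mono)
  then have "k - 1 \<le> card Y" using assms(8) X_def W_def Z_def by simp
  then obtain S where SY: "S \<subseteq> Y" and cS: "card S = k - 1"
    by (meson obtain_subset_with_card_n)
  have SV: "S \<subseteq> V" and uS: "u \<notin> S" and vS: "v \<notin> S" using SY Y_def by auto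
  have finS: "finite S" using SV fin finite_subset by auto
  have cu: "card (insert u S) = k" using finS uS cS assms(6) by simp
  have cv: "card (insert v S) = k" using finS vS cS assms(6) by simp
  define Q where "Q = {(a,b). a\<in>S \<and> b\<in>V-S \<and> E a b}"
  have du: "card (nbhd (token_vertices V k) (token_adj E) (insert u S)) + card (S \<inter> nbhd V E u)
       = card Q + card (nbhd V E u - S)"
  proof -
    have "insert u S \<subseteq> V" using SV assms(3) by simp
    note t = tok_deg[OF sg this, unfolded cu]
    show ?thesis using t ins_deg[OF sg SV assms(3) uS] unfolding Q_def by linarith
  qed
  have dv: "card (nbhd (token_vertices V k) (token_adj E) (insert v S)) + card (S \<inter> nbhd V E v)
       = card Q + card (nbhd V E v - S)"
  proof -
    have "insert v S \<subseteq> V" using SV assms(4) by simp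
    note t = tok_deg[OF sg this, unfolded cv]
    show ?thesis using t ins_deg[OF sg SV assms(4) vS] unfolding Q_def by linarith
  qed
  have finNv: "finite (nbhd V E v)" unfolding nbhd_def using fin by auto
  have su: "card (nbhd V E u - S) + card (S \<inter> nbhd V E u) = degree V E u"
  proof -
    have "card ((nbhd V E u - S) \<union> (S \<inter> nbhd V E u)) = card (nbhd V E u - S) + card (S \<inter> nbhd V E u)"
      by (rule card_Un_disjoint) (use finN in auto)
    moreover have "(nbhd V E u - S) \<union> (S \<inter> nbhd V E u) = nbhd V E u" by blast
    ultimately show ?thesis unfolding degree_def by simp
  qed
  have sv: "card (nbhd V E v - S) + card (S \<inter> nbhd V E v) = degree V E v"
  proof -
    have "card ((nbhd V E v - S) \<union> (S \<inter> nbhd V E v)) = card (nbhd V E v - S) + card (S \<inter> nbhd V E v)"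
      by (rule card_Un_disjoint) (use finNv in auto)
    moreover have "(nbhd V E v - S) \<union> (S \<inter> nbhd V E v) = nbhd V E v" by blast
    ultimately show ?thesis unfolding degree_def by simp
  qed
  have "S \<inter> nbhd V E v \<subseteq> S \<inter> nbhd V E u" using SY unfolding Y_def nbhd_def by auto
  then have le: "card (S \<inter> nbhd V E v) \<le> card (S \<inter> nbhd V E u)"
    using finS by (simp add: card_mono)
  have lt: "card (nbhd (token_vertices V k) (token_adj E) (insert u S))
      < card (nbhd (token_vertices V k) (token_adj E) (insert v S))"
    using du dv su sv le assms(5) by linarith
  have "insert u S \<in> token_vertices V k" "insert v S \<in> token_vertices V k"
    using cu cv SV assms(3,4) unfolding token_vertices_def by auto
  then have "degree (token_vertices V k) (token_adj E) (insert u S) = degree (token_vertices V k) (token_adj E) (insert v S)"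
    using reg unfolding token_graph_regular_def regular_def by blast
  then show False using lt unfolding degree_def by simp
qed

end
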